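(* Let $r\ge 3$. There exists an uncountable set of $r$-tuples $(\alpha_1,\dots,\alpha_r)\in\mathbb{R}^r$, each such that $1,\alpha_1,\dots,\alpha_r$ are linearly independent over $\mathbb{Q}$, such that for each of them there is $\nu_0$ with $\Delta_\nu^r=0$ for all $\nu>\nu_0$, where $\Delta_\nu^r$ is the determinant of the $(r+1)\times(r+1)$ integer matrix whose rows are the consecutive best approximations $m_\nu,m_{\nu+1},\dots,m_{\nu+r}$ (in the sense of linear form) for $(\alpha_1,\dots,\alpha_r)$.
   Context: For real $\alpha_1,\dots,\alpha_r$ and $m=(m_0,\dots,m_r)\in\mathbb{Z}^{r+1}\setminus\{0\}$ put $\zeta(m)=|m_0+m_1\alpha_1+\dots+m_r\alpha_r|$ and $M=\max_{0\le j\le r}|m_j|$. A point $m\in\mathbb{Z}^{r+1}\setminus\{0\}$ is a best approximation (in the sense of linear form) if $\zeta(m)=\min\{\zeta(n): n\in\mathbb{Z}^{r+1}\setminus\{0\},\ \max_j|n_j|\le M\}$. The best approximations are ordered as $m_1,m_2,\dots$ so that $\zeta(m_1)>\zeta(m_2)>\dots$ and $M_1<M_2<\dots$, where $M_\nu=\max_j|m_{j,\nu}|$. *)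

theory Defs
  imports "HOL-Library.Countable_Set" "Jordan_Normal_Form.Determinant" Complex_Main
begin

text \<open>An r-tuple (alpha_1,...,alpha_r) is a real list a of length r, alpha_j = a ! (j-1).
  An integer point m = (m_0,...,m_r) is an int list of length r+1, m_j = m ! j.\<close>

definition lin_indep_1 :: "real list \<Rightarrow> bool" where
  "lin_indep_1 a \<longleftrightarrow>
     (\<forall>q :: rat list. length q = length a + 1 \<longrightarrow>
        of_rat (q ! 0) + (\<Sum>j = 1..length a. of_rat (q ! j) * a ! (j - 1)) = 0 \<longrightarrow>
        (\<forall>j \<le> length a. q ! j = 0))"

definition zeta :: "real list \<Rightarrow> int list \<Rightarrow> real" where
  "zeta a m = \<bar>of_int (m ! 0) + (\<Sum>j = 1..length a. of_int (m ! j) * a ! (j - 1))\<bar>"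

definition height :: "int list \<Rightarrow> int" where
  "height m = Max (set (map abs m))"

definition admissible :: "real list \<Rightarrow> int list \<Rightarrow> bool" where
  "admissible a m \<longleftrightarrow> length m = length a + 1 \<and> m \<noteq> replicate (length a + 1) 0"

definition is_best_approx :: "real list \<Rightarrow> int list \<Rightarrow> bool" where
  "is_best_approx a m \<longleftrightarrow> admissible a m \<and>
     (\<forall>n. admissible a n \<and> height n \<le> height m \<longrightarrow> zeta a m \<le> zeta a n)"

definition best_approx_seq :: "real list \<Rightarrow> (nat \<Rightarrow> int list) \<Rightarrow> bool" where
  "best_approx_seq a ms \<longleftrightarrow>
     (\<forall>\<nu>\<ge>1. is_best_approx a (ms \<nu>)) \<and>
     (\<forall>\<nu>\<ge>1. zeta a (ms (\<nu> + 1)) < zeta a (ms \<nu>)) \<and>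
     (\<forall>m. is_best_approx a m \<longrightarrow> (\<exists>\<nu>\<ge>1. m = ms \<nu> \<or> m = map uminus (ms \<nu>)))"

definition Delta :: "nat \<Rightarrow> (nat \<Rightarrow> int list) \<Rightarrow> nat \<Rightarrow> int" where
  "Delta r ms \<nu> = det (mat (r + 1) (r + 1) (\<lambda>(i, j). ms (\<nu> + i) ! j))"

end

theory Submission
  imports Defs
begin


fun Ks :: "nat \<Rightarrow> nat \<Rightarrow> int" where
  "Ks r 0 = 1"
| "Ks r (Suc n) = 8 * (int r + 1) * Ks r n ^ r"

context fixes r :: nat assumes r3: "3 \<le> r" begin

lemma Ks_pos: "Ks r n \<ge> 1"
proof (induction n)
  case (Suc n)
  have a: "Ks r n ^ r \<ge> 1" using Suc by (simp add: one_le_power)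
  have b: "8 * (int r + 1) \<ge> 1" by simp
  have "1 * 1 \<le> 8 * (int r + 1) * Ks r n ^ r" by (rule mult_mono[OF b a]) auto
  then show ?case by simp
qed simp

lemma pow_ge_self: "(x::int) \<ge> 1 \<Longrightarrow> x ^ r \<ge> x"
proof -
  assume x: "x \<ge> 1"
  have "x ^ 1 \<le> x ^ r" using r3 x by (intro power_increasing) auto
  thus ?thesis by simp
qed

lemma Ks_Suc_ge: "Ks r (Suc n) \<ge> 8 * Ks r n"
proof -
  have a: "Ks r n ^ r \<ge> Ks r n" using pow_ge_self Ks_pos by blast
  have b: "8 \<le> 8 * (int r + 1)" by simp
  have "8 * Ks r n \<le> 8 * (int r + 1) * Ks r n ^ r"
    by (rule mult_mono[OF b a]) (use Ks_pos[of n] in auto)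
  then show ?thesis by simp
qed

lemma Ks_ge_pow: "Ks r n \<ge> 2 ^ n"
proof (induction n)
  case (Suc n) then show ?case using Ks_Suc_ge[of n] Ks_pos[of n] by (simp only: power_Suc)
qed simp

lemma Ks_mono: "k \<le> n \<Longrightarrow> Ks r k \<le> Ks r n"
proof (induction n)
  case (Suc n) then show ?case using Ks_Suc_ge[of n] Ks_pos[of n] by (cases "k = Suc n") auto
qed simp

lemma Ks_strict: "k < n \<Longrightarrow> Ks r k < Ks r n"
proof (induction n)
  case (Suc n) then show ?case using Ks_Suc_ge[of n] Ks_pos[of n] by (cases "k = n") auto
qed simp

lemma Ks_dvd_Suc: "Ks r n dvd Ks r (Suc n)"
proof -
  have "Ks r n dvd Ks r n ^ r" using r3 by (intro dvd_power) auto
  then show ?thesis by simp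
qed

lemma Ks_dvd: "k \<le> n \<Longrightarrow> Ks r k dvd Ks r n"
proof (induction n)
  case (Suc n)
  then show ?case using Ks_dvd_Suc[of n] by (cases "k = Suc n") (auto intro: dvd_trans)
qed simp

lemma Ks_pow_dvd: "k < n \<Longrightarrow> Ks r k ^ (r-1) dvd Ks r n"
proof -
  assume "k < n"
  then obtain n' where n: "n = Suc n'" "k \<le> n'" by (cases n) auto
  have "Ks r k ^ (r-1) dvd Ks r n' ^ (r-1)" using Ks_dvd[OF n(2)] by (rule dvd_power_same)
  also have "Ks r n' ^ (r-1) dvd Ks r n' ^ r" by (rule le_imp_power_dvd) simp
  also have "\<dots> dvd Ks r n" using n by simp
  finally show ?thesis .
qed

lemma Ks_add_ge: "Ks r (i + m) \<ge> 2 ^ i * Ks r m"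
proof (induction i)
  case (Suc i)
  have "2 ^ Suc i * Ks r m = 2 * (2 ^ i * Ks r m)" by simp
  then show ?case using Suc Ks_Suc_ge[of "i+m"] Ks_pos[of "i+m"] by (simp only: add_Suc)
qed simp

lemma Ks_Suc_eq: "Ks r (Suc n) = 8 * (int r + 1) * Ks r n ^ r" by simp

end



definition ee :: "(nat \<Rightarrow> bool) \<Rightarrow> nat \<Rightarrow> int" where
  "ee \<epsilon> k = 1 + of_bool (\<epsilon> (k - 1))"

definition num :: "nat \<Rightarrow> (nat \<Rightarrow> bool) \<Rightarrow> nat \<Rightarrow> nat \<Rightarrow> int" where
  "num r \<epsilon> k j = (if j = 1 then (if even k then ee \<epsilon> k * Ks r k ^ (r-2) else 0)
     else if j = 2 then (if odd k then ee \<epsilon> k * Ks r k ^ (r-2) else 0) else Ks r k ^ (j-3))"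

definition tm :: "nat \<Rightarrow> (nat \<Rightarrow> bool) \<Rightarrow> nat \<Rightarrow> nat \<Rightarrow> real" where
  "tm r \<epsilon> k j = (if k = 0 then 0 else of_int (num r \<epsilon> k j) / of_int (Ks r k) ^ (r-1))"

definition al :: "nat \<Rightarrow> (nat \<Rightarrow> bool) \<Rightarrow> nat \<Rightarrow> real" where
  "al r \<epsilon> j = suminf (\<lambda>k. tm r \<epsilon> k j)"

definition tr :: "nat \<Rightarrow> (nat \<Rightarrow> bool) \<Rightarrow> nat \<Rightarrow> nat \<Rightarrow> real" where
  "tr r \<epsilon> n j = (\<Sum>k<Suc n. tm r \<epsilon> k j)"

definition tlx :: "nat \<Rightarrow> (nat \<Rightarrow> bool) \<Rightarrow> nat \<Rightarrow> nat \<Rightarrow> real" where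
  "tlx r \<epsilon> n j = al r \<epsilon> j - tr r \<epsilon> n j"

context fixes r :: nat and \<epsilon> :: "nat \<Rightarrow> bool" assumes r3: "3 \<le> r" begin

lemma ee_bounds: "1 \<le> ee \<epsilon> k" "ee \<epsilon> k \<le> 2"
  unfolding ee_def by auto

lemma Kpos: "Ks r n \<ge> 1" using Ks_pos[OF r3] .
lemma KposR: "(of_int (Ks r n) :: real) \<ge> 1" using Kpos by simp

lemma num_nonneg: "num r \<epsilon> k j \<ge> 0"
  unfolding num_def using ee_bounds[of k] Kpos[of k] by auto

lemma num_le: assumes "j \<le> r" shows "num r \<epsilon> k j \<le> 2 * Ks r k ^ (r-2)"
proof -
  have K1: "Ks r k \<ge> 1" using Kpos .
  have p: "Ks r k ^ (r-2) \<ge> 1" using K1 by simp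
  have "Ks r k ^ (j-3) \<le> Ks r k ^ (r-2)" using assms K1 by (intro power_increasing) auto
  then show ?thesis unfolding num_def using ee_bounds[of k] p
    by (auto intro: mult_right_mono)
qed

lemma tm_nonneg: "tm r \<epsilon> k j \<ge> 0"
  unfolding tm_def using num_nonneg[of k j] Kpos[of k] by auto

lemma pow_split: "(x::real) ^ (r-1) = x ^ (r-2) * x"
proof -
  have "r - 1 = Suc (r-2)" using r3 by simp
  then show ?thesis by (simp add: mult.commute)
qed

lemma tm_le: assumes "j \<le> r" shows "tm r \<epsilon> k j \<le> 2 / of_int (Ks r k)"
proof (cases "k = 0")
  case True then show ?thesis unfolding tm_def using Kpos[of k] by simp
next
  case False
  let ?K = "(of_int (Ks r k) :: real)"
  have K1: "?K \<ge> 1" using KposR .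
  have "of_int (num r \<epsilon> k j) \<le> (2 * ?K ^ (r-2) :: real)"
    using num_le[OF assms, of k] by (metis of_int_le_iff of_int_mult of_int_numeral of_int_power)
  then have "of_int (num r \<epsilon> k j) / ?K ^ (r-1) \<le> 2 * ?K ^ (r-2) / ?K ^ (r-1)"
    using K1 by (intro divide_right_mono) auto
  also have "\<dots> = 2 / ?K" unfolding pow_split using K1 by (simp add: field_simps)
  finally show ?thesis unfolding tm_def using False by simp
qed

lemma tm_le_geom: assumes "j \<le> r" shows "tm r \<epsilon> (i + m) j \<le> (2 / of_int (Ks r m)) * (1/2) ^ i"
proof -
  have a: "of_int (Ks r (i + m)) \<ge> (2 ^ i * of_int (Ks r m) :: real)"
    using Ks_add_ge[OF r3, of i m] by (metis of_int_le_iff of_int_mult of_int_numeral of_int_power)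
  have pos: "(0::real) < 2 ^ i * of_int (Ks r m)" using KposR[of m] by simp
  have "tm r \<epsilon> (i + m) j \<le> 2 / of_int (Ks r (i + m))" using tm_le[OF assms] .
  also have "\<dots> \<le> 2 / (2 ^ i * of_int (Ks r m))" using a pos by (intro divide_left_mono) auto
  also have "\<dots> = (2 / of_int (Ks r m)) * (1/2) ^ i" by (simp add: power_one_over field_simps)
  finally show ?thesis .
qed

lemma summable_geo: "summable (\<lambda>i. (c::real) * (1/2) ^ i)"
  by (intro summable_mult summable_geometric) simp

lemma suminf_geo: "(\<Sum>i. (c::real) * (1/2) ^ i) = 2 * c"
  using suminf_mult[OF summable_geometric[of "1/2::real"], of c] suminf_geometric[of "1/2::real"]
  by simp

lemma summable_tm_shift: assumes "j \<le> r" shows "summable (\<lambda>i. tm r \<epsilon> (i + m) j)"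
  by (rule summable_comparison_test[OF _ summable_geo[of "2 / of_int (Ks r m)"]])
     (use tm_le_geom[OF assms] tm_nonneg in auto)

lemma summable_tm: assumes "j \<le> r" shows "summable (\<lambda>k. tm r \<epsilon> k j)"
  using summable_tm_shift[OF assms, of 0] by simp

lemma tl_eq: assumes "j \<le> r" shows "tlx r \<epsilon> n j = (\<Sum>i. tm r \<epsilon> (i + Suc n) j)"
  unfolding tlx_def al_def tr_def
  using suminf_split_initial_segment[OF summable_tm[OF assms], of "Suc n"] by simp

lemma tl_nonneg: assumes "j \<le> r" shows "tlx r \<epsilon> n j \<ge> 0"
  unfolding tl_eq[OF assms] by (intro suminf_nonneg summable_tm_shift assms tm_nonneg)

lemma tl_le: assumes "j \<le> r" shows "tlx r \<epsilon> n j \<le> 4 / of_int (Ks r (Suc n))"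
proof -
  have "tlx r \<epsilon> n j \<le> (\<Sum>i. (2 / of_int (Ks r (Suc n))) * (1/2) ^ i)"
    unfolding tl_eq[OF assms]
    by (intro suminf_le summable_tm_shift assms summable_geo tm_le_geom)
  also have "\<dots> = 4 / of_int (Ks r (Suc n))" unfolding suminf_geo by simp
  finally show ?thesis .
qed

lemma tr_Suc: "tr r \<epsilon> (Suc n) j = tr r \<epsilon> n j + tm r \<epsilon> (Suc n) j"
  unfolding tr_def by simp

lemma tl_Suc: "tlx r \<epsilon> n j = tm r \<epsilon> (Suc n) j + tlx r \<epsilon> (Suc n) j"
  unfolding tlx_def tr_Suc by simp

lemma tl_ge: assumes "j \<le> r" shows "tlx r \<epsilon> n j \<ge> tm r \<epsilon> (Suc n) j"
  using tl_Suc[of n j] tl_nonneg[OF assms, of "Suc n"] by simp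

lemma tr_0: "tr r \<epsilon> 0 j = 0" unfolding tr_def tm_def by simp

lemma al_eq: "al r \<epsilon> j = tr r \<epsilon> n j + tlx r \<epsilon> n j" unfolding tlx_def by simp

end



lemma digits_zero:
  fixes K :: int and v :: "nat \<Rightarrow> int"
  assumes "K \<ge> 2" "\<forall>i<R. \<bar>v i\<bar> < K" "K ^ R dvd (\<Sum>i<R. v i * K ^ i)"
  shows "\<forall>i<R. v i = 0"
  using assms(2,3)
proof (induction R arbitrary: v)
  case 0 then show ?case by simp
next
  case (Suc R)
  have eq: "(\<Sum>i<Suc R. v i * K ^ i) = v 0 + K * (\<Sum>i<R. v (Suc i) * K ^ i)"
    unfolding sum.lessThan_Suc_shift by (simp add: sum_distrib_left mult.assoc mult.left_commute)
  have "K dvd K ^ Suc R" by simp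
  then have "K dvd (\<Sum>i<Suc R. v i * K ^ i)" using Suc.prems(2) by (rule dvd_trans)
  then have "K dvd v 0" unfolding eq by (simp add: dvd_add_left_iff)
  then obtain t where t: "v 0 = K * t" by blast
  have v0: "v 0 = 0"
  proof (rule ccontr)
    assume "v 0 \<noteq> 0"
    then have "t \<noteq> 0" using t by auto
    then have "\<bar>K * t\<bar> \<ge> K" using assms(1) by (simp add: abs_mult)
    then show False using Suc.prems(1) t by auto
  qed
  have "K * K ^ R dvd K * (\<Sum>i<R. v (Suc i) * K ^ i)"
    using Suc.prems(2) unfolding eq v0 by simp
  then have "K ^ R dvd (\<Sum>i<R. v (Suc i) * K ^ i)" using assms(1) by simp
  moreover have "\<forall>i<R. \<bar>v (Suc i)\<bar> < K" using Suc.prems(1) by simp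
  ultimately have "\<forall>i<R. v (Suc i) = 0" using Suc.IH[of "\<lambda>i. v (Suc i)"] by blast
  then show ?case using v0 unfolding All_less_Suc2 by simp
qed


definition fm :: "nat \<Rightarrow> (nat \<Rightarrow> bool) \<Rightarrow> int list \<Rightarrow> real" where
  "fm r \<epsilon> m = of_int (m ! 0) + (\<Sum>j = 1..r. of_int (m ! j) * al r \<epsilon> j)"

lemma aux_frac: "(x::real) > 0 \<Longrightarrow> B > 0 \<Longrightarrow> (s::real) \<ge> 0 \<Longrightarrow> s * x * 4 / (8 * (s + 1) * (B * x)) = (s / (s+1)) * (1 / (2*B))"
  by (simp add: divide_simps)

lemma sum_split12: "(3::nat) \<le> r \<Longrightarrow> (\<Sum>j = 1..r. f j) = f 1 + f 2 + (\<Sum>j = 3..r. (f j :: 'a::comm_monoid_add))"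
proof -
  assume r: "3 \<le> r"
  have e1: "{1..r} = insert 1 {2..r}" using r by auto
  have e2: "{2..r} = insert 2 {3..r}" using r by auto
  show ?thesis unfolding e1 e2 by (simp add: add.assoc)
qed

lemma sum_shift3: "(\<Sum>j = 3..(r::nat). f j) = (\<Sum>i<r-2. (f (i+3) :: 'a::comm_monoid_add))"
  by (rule sum.reindex_bij_witness[of _ "\<lambda>i. i + 3" "\<lambda>j. j - 3"]) auto

context fixes r :: nat and \<epsilon> :: "nat \<Rightarrow> bool" assumes r3: "3 \<le> r" begin

lemma tm_mult_int: assumes "k < n" shows "\<exists>y::int. (of_int (Ks r n) :: real) ^ (r-1) * tm r \<epsilon> k j = of_int (Ks r n ^ (r-2) * y)"
proof (cases "k = 0")
  case True then show ?thesis by (intro exI[of _ 0]) (simp add: tm_def)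
next
  case False
  obtain W where W: "Ks r n = Ks r k ^ (r-1) * W" using Ks_pow_dvd[OF r3 assms] by blast
  let ?Kn = "(of_int (Ks r n) :: real)" and ?Kk = "(of_int (Ks r k) :: real)"
  have Kk: "?Kk ^ (r-1) \<noteq> 0" using KposR[OF r3, of k] by auto
  have WR: "?Kn = ?Kk ^ (r-1) * of_int W" using W by simp
  have "?Kn ^ (r-1) * tm r \<epsilon> k j = ?Kn ^ (r-2) * ?Kn * (of_int (num r \<epsilon> k j) / ?Kk ^ (r-1))"
    unfolding tm_def using False pow_split[OF r3] by simp
  also have "\<dots> = ?Kn ^ (r-2) * (of_int W * of_int (num r \<epsilon> k j))"
  proof -
    have "?Kn * (of_int (num r \<epsilon> k j) / ?Kk ^ (r-1)) = of_int W * of_int (num r \<epsilon> k j)"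
      using Kk Kpos[OF r3, of k] unfolding WR by simp
    then show ?thesis by (metis mult.assoc)
  qed
  finally show ?thesis by (intro exI[of _ "W * num r \<epsilon> k j"]) simp
qed

lemma tm_self: assumes "n \<ge> 1" shows "(of_int (Ks r n) :: real) ^ (r-1) * tm r \<epsilon> n j = of_int (num r \<epsilon> n j)"
  unfolding tm_def using assms KposR[OF r3, of n] by simp

definition rho :: "nat \<Rightarrow> nat \<Rightarrow> int" where
  "rho n j = (if j \<ge> 3 then Ks r n ^ (j-3) else 0)"

lemma num_self: assumes "1 \<le> j" shows "\<exists>y. num r \<epsilon> n j = Ks r n ^ (r-2) * y + rho n j"
  unfolding num_def rho_def using assms
  by (auto intro: exI[of _ "ee \<epsilon> n"] exI[of _ 0])

lemma tr_struct: assumes "n \<ge> 1" "1 \<le> j"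
  shows "\<exists>Y. (of_int (Ks r n) :: real) ^ (r-1) * tr r \<epsilon> n j = of_int (Ks r n ^ (r-2) * Y + rho n j)"
proof -
  have "\<forall>k\<in>{..<n}. \<exists>y::int. (of_int (Ks r n) :: real) ^ (r-1) * tm r \<epsilon> k j = of_int (Ks r n ^ (r-2) * y)"
    using tm_mult_int by blast
  then obtain y where y: "\<forall>k\<in>{..<n}. (of_int (Ks r n) :: real) ^ (r-1) * tm r \<epsilon> k j = of_int (Ks r n ^ (r-2) * y k)"
    by metis
  obtain z where z: "num r \<epsilon> n j = Ks r n ^ (r-2) * z + rho n j" using num_self[OF assms(2)] by blast
  have "(of_int (Ks r n) :: real) ^ (r-1) * tr r \<epsilon> n j
      = (\<Sum>k<n. (of_int (Ks r n) :: real) ^ (r-1) * tm r \<epsilon> k j) + (of_int (Ks r n) :: real) ^ (r-1) * tm r \<epsilon> n j"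
    unfolding tr_def by (simp add: sum_distrib_left distrib_left)
  also have "\<dots> = (\<Sum>k<n. of_int (Ks r n ^ (r-2) * y k)) + of_int (num r \<epsilon> n j)"
    using y tm_self[OF assms(1)] by simp
  also have "\<dots> = of_int (Ks r n ^ (r-2) * (sum y {..<n} + z) + rho n j)"
    unfolding z by (simp add: sum_distrib_left distrib_left)
  finally show ?thesis by blast
qed


lemma Ks_ge2: "n \<ge> 1 \<Longrightarrow> Ks r n \<ge> 2"
proof -
  assume "n \<ge> 1"
  then have "(2::int) ^ 1 \<le> 2 ^ n" by (intro power_increasing) auto
  then show ?thesis using Ks_ge_pow[OF r3, of n] by simp
qed

lemma KsSucR: "(of_int (Ks r (Suc n)) :: real) = 8 * (of_nat r + 1) * of_int (Ks r n) ^ r"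
  by simp

lemma powr_split_int: "(x::int) ^ (r-1) = x ^ (r-2) * x"
proof -
  have "r - 1 = Suc (r-2)" using r3 by simp
  then show ?thesis by (simp add: mult.commute)
qed

lemma tail_small:
  assumes n: "n \<ge> 1" and mb: "\<forall>j\<le>r. \<bar>m!j\<bar> < Ks r n"
  shows "\<bar>\<Sum>j = 1..r. of_int (m!j) * tlx r \<epsilon> n j\<bar> < 1 / (2 * of_int (Ks r n) ^ (r-1))"
proof -
  let ?K = "(of_int (Ks r n) :: real)"
  have K1: "?K \<ge> 1" using KposR[OF r3] .
  have "\<bar>\<Sum>j = 1..r. of_int (m!j) * tlx r \<epsilon> n j\<bar> \<le> (\<Sum>j = 1..r. \<bar>of_int (m!j) * tlx r \<epsilon> n j\<bar>)"
    by (rule sum_abs)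
  also have "\<dots> \<le> (\<Sum>j = 1..r. ?K * (4 / of_int (Ks r (Suc n))))"
  proof (rule sum_mono)
    fix j assume j: "j \<in> {1..r}"
    have a: "\<bar>(of_int (m!j) :: real)\<bar> \<le> ?K" using mb j by (metis atLeastAtMost_iff less_imp_le of_int_abs of_int_le_iff)
    have "\<bar>of_int (m!j) * tlx r \<epsilon> n j\<bar> = \<bar>(of_int (m!j) :: real)\<bar> * tlx r \<epsilon> n j"
      using tl_nonneg[OF r3, of j] j by (simp add: abs_mult)
    also have "\<dots> \<le> ?K * (4 / of_int (Ks r (Suc n)))"
      using a tl_le[OF r3, of j] tl_nonneg[OF r3, of j] j by (intro mult_mono) auto
    finally show "\<bar>of_int (m!j) * tlx r \<epsilon> n j\<bar> \<le> ?K * (4 / of_int (Ks r (Suc n)))" .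
  qed
  also have "\<dots> = (of_nat r / (of_nat r + 1)) * (1 / (2 * ?K ^ (r-1)))"
  proof -
    have kr: "?K ^ r = ?K ^ (r-1) * ?K"
    proof -
      have "r = Suc (r-1)" using r3 by simp
      then have "?K ^ r = ?K ^ Suc (r-1)" by metis
      then show ?thesis by (simp add: mult.commute)
    qed
    have B: "?K ^ (r-1) > 0" using K1 by simp
    have r1: "(of_nat r + 1 :: real) > 0" by simp
    have "(\<Sum>j = 1..r. ?K * (4 / of_int (Ks r (Suc n)))) = of_nat r * ?K * 4 / (8 * (of_nat r + 1) * (?K ^ (r-1) * ?K))"
      unfolding KsSucR kr by simp
    also have "\<dots> = (of_nat r / (of_nat r + 1)) * (1 / (2 * ?K ^ (r-1)))"
      using B K1 by (intro aux_frac) auto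
    finally show ?thesis .
  qed
  also have "\<dots> < 1 * (1 / (2 * ?K ^ (r-1)))"
    using K1 by (intro mult_strict_right_mono) auto
  finally show ?thesis by simp
qed

lemma gap:
  assumes n: "n \<ge> 1" and mb: "\<forall>j\<le>r. \<bar>m!j\<bar> < Ks r n"
  shows "\<bar>fm r \<epsilon> m\<bar> > 1 / (2 * of_int (Ks r n) ^ (r-1)) \<or>
         ((\<forall>j\<in>{3..r}. m!j = 0) \<and> fm r \<epsilon> m = of_int (m!1) * tlx r \<epsilon> n 1 + of_int (m!2) * tlx r \<epsilon> n 2)"
proof -
  let ?K = "(of_int (Ks r n) :: real)" and ?Ki = "Ks r n"
  have K1: "?K \<ge> 1" using KposR[OF r3] .
  have "\<forall>j\<in>{1..r}. \<exists>Y. ?K ^ (r-1) * tr r \<epsilon> n j = of_int (?Ki ^ (r-2) * Y + rho n j)"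
    using tr_struct[OF n] by auto
  then obtain Y where Y: "\<forall>j\<in>{1..r}. ?K ^ (r-1) * tr r \<epsilon> n j = of_int (?Ki ^ (r-2) * Y j + rho n j)"
    by metis
  define X where "X = of_int (m!0) + (\<Sum>j = 1..r. of_int (m!j) * tr r \<epsilon> n j)"
  define T where "T = (\<Sum>j = 1..r. of_int (m!j) * tlx r \<epsilon> n j)"
  have fmXT: "fm r \<epsilon> m = X + T"
    unfolding fm_def X_def T_def al_eq[OF r3, where n=n] by (simp add: distrib_left sum.distrib)
  define D where "D = (\<Sum>j = 1..r. m!j * rho n j)"
  define I where "I = ?Ki ^ (r-2) * (m!0 * ?Ki + (\<Sum>j = 1..r. m!j * Y j)) + D"
  have Iint: "m!0 * ?Ki ^ (r-1) + (\<Sum>j = 1..r. m!j * (?Ki ^ (r-2) * Y j + rho n j)) = I"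
    unfolding I_def D_def powr_split_int
    by (simp add: algebra_simps sum.distrib sum_distrib_left)
  have KX: "?K ^ (r-1) * X = of_int I"
  proof -
    have "?K ^ (r-1) * X = of_int (m!0) * ?K ^ (r-1) + (\<Sum>j = 1..r. of_int (m!j) * (?K ^ (r-1) * tr r \<epsilon> n j))"
      unfolding X_def distrib_left sum_distrib_left by (simp add: ac_simps)
    also have "\<dots> = of_int (m!0) * ?K ^ (r-1) + (\<Sum>j = 1..r. of_int (m!j * (?Ki ^ (r-2) * Y j + rho n j)))"
      by (intro arg_cong2[where f="(+)"] refl sum.cong) (use Y in auto)
    also have "\<dots> = of_int (m!0 * ?Ki ^ (r-1) + (\<Sum>j = 1..r. m!j * (?Ki ^ (r-2) * Y j + rho n j)))"
      by simp
    finally show ?thesis unfolding Iint .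
  qed
  show ?thesis
  proof (cases "I = 0")
    case False
    have "\<bar>?K ^ (r-1) * X\<bar> \<ge> 1" using False unfolding KX by linarith
    then have "?K ^ (r-1) * \<bar>X\<bar> \<ge> 1" using K1 by (simp add: abs_mult)
    then have X1: "\<bar>X\<bar> \<ge> 1 / ?K ^ (r-1)" using K1 by (simp add: field_simps)
    have T1: "\<bar>T\<bar> < 1 / (2 * ?K ^ (r-1))" unfolding T_def by (rule tail_small[OF n mb])
    have "1 / ?K ^ (r-1) = 2 * (1 / (2 * ?K ^ (r-1)))" by simp
    then have "\<bar>X + T\<bar> > 1 / (2 * ?K ^ (r-1))" using X1 T1 by linarith
    then show ?thesis unfolding fmXT by blast
  next
    case True
    have "D = - (?Ki ^ (r-2) * (m!0 * ?Ki + (\<Sum>j = 1..r. m!j * Y j)))"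
      using True unfolding I_def by linarith
    then have Ddvd: "?Ki ^ (r-2) dvd D" by simp
    have "D = (\<Sum>j = 3..r. m!j * rho n j)" unfolding D_def sum_split12[OF r3] by (simp add: rho_def)
    also have "\<dots> = (\<Sum>i<r-2. m!(i+3) * ?Ki ^ i)" unfolding sum_shift3 by (simp add: rho_def)
    finally have dv: "?Ki ^ (r-2) dvd (\<Sum>i<r-2. m!(i+3) * ?Ki ^ i)" using Ddvd by simp
    have bd: "\<forall>i<r-2. \<bar>m!(i+3)\<bar> < ?Ki" using mb by auto
    have z: "\<forall>i<r-2. m!(i+3) = 0" by (rule digits_zero[OF Ks_ge2[OF n] bd dv])
    have w: "\<forall>j\<in>{3..r}. m!j = 0"
    proof
      fix j assume j: "j \<in> {3..r}"
      then have "j - 3 < r - 2" "j = (j-3) + 3" by auto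
      then show "m!j = 0" using z by metis
    qed
    have "X = 0" using KX True K1 by simp
    moreover have "T = of_int (m!1) * tlx r \<epsilon> n 1 + of_int (m!2) * tlx r \<epsilon> n 2"
      unfolding T_def sum_split12[OF r3] using w by simp
    ultimately show ?thesis using w fmXT by simp
  qed
qed

end



lemma height_bound:
  assumes "m \<noteq> []"
  shows "height m \<le> B \<longleftrightarrow> (\<forall>i<length m. \<bar>m!i\<bar> \<le> B)"
proof -
  have fin: "finite (set (map abs m))" by simp
  have ne: "set (map abs m) \<noteq> {}" using assms by simp
  show ?thesis unfolding height_def Max_le_iff[OF fin ne] by (auto simp: in_set_conv_nth; meson nth_mem)
qed

lemma height_ge: "i < length m \<Longrightarrow> \<bar>m!i\<bar> \<le> height m"
  unfolding height_def by (intro Max_ge) auto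

context fixes r :: nat and \<epsilon> :: "nat \<Rightarrow> bool" assumes r3: "3 \<le> r" begin

lemma tm12: assumes "j = 1 \<or> j = 2" "k \<ge> 1"
  shows "tm r \<epsilon> k j = (if (j = 1 \<longleftrightarrow> even k) then of_int (ee \<epsilon> k) / of_int (Ks r k) else 0)"
proof -
  let ?K = "(of_int (Ks r k) :: real)"
  have K1: "?K \<ge> 1" using KposR[OF r3] .
  have "of_int (ee \<epsilon> k * Ks r k ^ (r-2)) / ?K ^ (r-1) = of_int (ee \<epsilon> k) / ?K"
    unfolding pow_split[OF r3] using K1 by simp
  then show ?thesis using assms unfolding tm_def num_def by auto
qed

lemma tr_int12: assumes "j = 1 \<or> j = 2" shows "\<exists>P. (of_int P :: real) = of_int (Ks r N) * tr r \<epsilon> N j"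
proof -
  have "\<forall>k\<in>{..<Suc N}. \<exists>y::int. of_int y = (of_int (Ks r N) :: real) * tm r \<epsilon> k j"
  proof
    fix k assume k: "k \<in> {..<Suc N}"
    show "\<exists>y::int. of_int y = (of_int (Ks r N) :: real) * tm r \<epsilon> k j"
    proof (cases "k = 0")
      case True then show ?thesis by (intro exI[of _ 0]) (simp add: tm_def)
    next
      case False
      obtain W where W: "Ks r N = Ks r k * W" using Ks_dvd[OF r3, of k N] k by auto
      have Kk: "Ks r k \<noteq> 0" using Kpos[OF r3, of k] by simp
      show ?thesis using False assms Kk
        by (intro exI[of _ "if (j = 1 \<longleftrightarrow> even k) then ee \<epsilon> k * W else 0"]) (auto simp: tm12 W)
    qed
  qed
  then obtain y where y: "\<forall>k\<in>{..<Suc N}. (of_int (y k) :: real) = of_int (Ks r N) * tm r \<epsilon> k j" by metis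
  have "(of_int (sum y {..<Suc N}) :: real) = of_int (Ks r N) * tr r \<epsilon> N j"
    unfolding tr_def sum_distrib_left of_int_sum using y by (intro sum.cong) auto
  then show ?thesis by blast
qed

lemma tr_nonneg: "tr r \<epsilon> N j \<ge> 0" unfolding tr_def by (intro sum_nonneg tm_nonneg[OF r3])

lemma al_lt1: assumes "1 \<le> j" "j \<le> r" shows "al r \<epsilon> j < 1"
proof -
  have "al r \<epsilon> j = tlx r \<epsilon> 0 j" using al_eq[OF r3, where j=j and n=0] tr_0[OF r3] by simp
  also have "\<dots> \<le> 4 / of_int (Ks r 1)" using tl_le[OF r3 assms(2), where n=0 and \<epsilon>=\<epsilon>] by simp
  also have "\<dots> < 1" using r3 by simp
  finally show ?thesis .
qed

definition aa :: "real list" where "aa = map (al r \<epsilon>) [1..<r+1]"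

lemma aa_nth: "1 \<le> j \<Longrightarrow> j \<le> r \<Longrightarrow> aa ! (j - 1) = al r \<epsilon> j"
  unfolding aa_def by (subst nth_map) (auto simp del: upt_Suc)

lemma length_aa: "length aa = r" unfolding aa_def by simp

lemma zeta_fm: "zeta aa m = \<bar>fm r \<epsilon> m\<bar>"
  unfolding zeta_def fm_def length_aa
  by (intro arg_cong[where f=abs] arg_cong2[where f="(+)"] refl sum.cong) (auto simp: aa_nth[unfolded One_nat_def])


lemma aux_frac2: "(x::real) > 0 \<Longrightarrow> B > 0 \<Longrightarrow> (s::real) > 0 \<Longrightarrow> 4 * x / (8 * (s + 1) * (B * x)) < 1 / (2*B)"
  by (simp add: divide_simps)

lemma fm_single:
  assumes "b \<in> {1..r}"
  shows "fm r \<epsilon> (map (\<lambda>i. if i = 0 then P else if i = b then Q else 0) [0..<Suc r])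
         = of_int P + of_int Q * al r \<epsilon> b"
proof -
  let ?p = "map (\<lambda>i. if i = 0 then P else if i = b then Q else 0) [0..<Suc r]"
  have nth: "\<And>i. i \<le> r \<Longrightarrow> ?p ! i = (if i = 0 then P else if i = b then Q else 0)"
    by (subst nth_map) (auto simp del: upt_Suc)
  have "(\<Sum>j = 1..r. of_int (?p ! j) * al r \<epsilon> j) = (\<Sum>j = 1..r. if j = b then of_int Q * al r \<epsilon> b else 0)"
    by (intro sum.cong) (auto simp: nth simp del: upt_Suc)
  also have "\<dots> = of_int Q * al r \<epsilon> b" using assms by simp
  finally show ?thesis unfolding fm_def using nth[of 0] by (simp del: upt_Suc)
qed

lemma Lpoint:
  assumes n: "n \<ge> 2"
  shows "\<exists>p. length p = Suc r \<and> p \<noteq> replicate (Suc r) 0 \<and> height p \<le> Ks r (n-1) \<and>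
    \<bar>fm r \<epsilon> p\<bar> < 1 / (2 * of_int (Ks r n) ^ (r-1))"
proof -
  define b where "b = (if even (n-1) then 1 else 2::nat)"
  have b12: "b = 1 \<or> b = 2" unfolding b_def by auto
  have br: "b \<in> {1..r}" using b12 r3 by auto
  have tmnb: "tm r \<epsilon> n b = 0"
  proof -
    have "\<not> (b = 1 \<longleftrightarrow> even n)" using n unfolding b_def by auto
    then show ?thesis using tm12[OF b12, of n] n by simp
  qed
  obtain P where P: "(of_int P :: real) = of_int (Ks r (n-1)) * tr r \<epsilon> (n-1) b"
    using tr_int12[OF b12] by blast
  define p where "p = map (\<lambda>i. if i = 0 then -P else if i = b then Ks r (n-1) else 0) [0..<Suc r]"
  have nth: "\<And>i. i \<le> r \<Longrightarrow> p ! i = (if i = 0 then -P else if i = b then Ks r (n-1) else 0)"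
    unfolding p_def by (subst nth_map) (auto simp del: upt_Suc)
  have len: "length p = Suc r" unfolding p_def by simp
  let ?K = "(of_int (Ks r n) :: real)" and ?K1 = "(of_int (Ks r (n-1)) :: real)"
  have K1: "?K \<ge> 1" using KposR[OF r3] .
  have K11: "?K1 \<ge> 1" using KposR[OF r3] .
  have K1K: "?K1 \<le> ?K" using Ks_mono[OF r3, of "n-1" n] by simp
  have tl_eq2: "tlx r \<epsilon> (n-1) b = tlx r \<epsilon> n b"
    using tl_Suc[OF r3, where n="n-1" and j=b and \<epsilon>=\<epsilon>] tmnb n by simp
  have fmp: "fm r \<epsilon> p = ?K1 * tlx r \<epsilon> n b"
  proof -
    have "fm r \<epsilon> p = of_int (-P) + ?K1 * al r \<epsilon> b" unfolding p_def by (rule fm_single[OF br])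
    also have "\<dots> = ?K1 * (al r \<epsilon> b - tr r \<epsilon> (n-1) b)" using P by (simp add: algebra_simps)
    also have "\<dots> = ?K1 * tlx r \<epsilon> (n-1) b" unfolding tlx_def by simp
    finally show ?thesis unfolding tl_eq2 .
  qed
  have tnn: "tlx r \<epsilon> n b \<ge> 0" using tl_nonneg[OF r3] br by auto
  have "\<bar>fm r \<epsilon> p\<bar> = ?K1 * tlx r \<epsilon> n b" unfolding fmp using tnn K11 by simp
  also have "\<dots> \<le> ?K * (4 / of_int (Ks r (Suc n)))"
    using tl_le[OF r3, of b, where n=n and \<epsilon>=\<epsilon>] br K1K tnn K11 by (intro mult_mono) auto
  also have "\<dots> = 4 * ?K / (8 * (of_nat r + 1) * (?K ^ (r-1) * ?K))"
  proof -
    have "r = Suc (r-1)" using r3 by simp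
    then have "?K ^ r = ?K ^ Suc (r-1)" by metis
    then have "?K ^ r = ?K ^ (r-1) * ?K" by (simp add: mult.commute)
    then show ?thesis unfolding KsSucR[OF r3] by simp
  qed
  also have "\<dots> < 1 / (2 * ?K ^ (r-1))" using K1 r3 by (intro aux_frac2) auto
  finally have small: "\<bar>fm r \<epsilon> p\<bar> < 1 / (2 * ?K ^ (r-1))" .
  have Pnn: "P \<ge> 0"
  proof -
    have "(of_int P :: real) \<ge> 0" unfolding P using K11 tr_nonneg by simp
    then show ?thesis by simp
  qed
  have Ple: "P \<le> Ks r (n-1)"
  proof -
    have "tr r \<epsilon> (n-1) b \<le> al r \<epsilon> b"
      using al_eq[OF r3, where j=b and n="n-1" and \<epsilon>=\<epsilon>] tl_nonneg[OF r3, of b] br by auto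
    also have "\<dots> < 1" using al_lt1 br by auto
    finally have "tr r \<epsilon> (n-1) b \<le> 1" by simp
    then have "(of_int P :: real) \<le> ?K1" unfolding P using K11
      by (intro mult_left_le) auto
    then show ?thesis by simp
  qed
  have pne: "p \<noteq> []" using len by auto
  have hp: "height p \<le> Ks r (n-1)"
    unfolding height_bound[OF pne]
  proof (intro allI impI)
    fix i assume "i < length p"
    then have "i \<le> r" using len by simp
    then show "\<bar>p!i\<bar> \<le> Ks r (n-1)" unfolding nth[OF \<open>i \<le> r\<close>] using Pnn Ple Kpos[OF r3, of "n-1"] by auto
  qed
  have "p ! b \<noteq> 0" using nth[of b] br Kpos[OF r3, of "n-1"] by auto
  then have "p \<noteq> replicate (Suc r) 0" using br by auto
  then show ?thesis using len hp small by blast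
qed


lemma ba_in_L:
  assumes ba: "is_best_approx aa m" and n: "n \<ge> 2"
    and h1: "Ks r (n-1) \<le> height m" and h2: "height m < Ks r n"
  shows "\<forall>j\<in>{3..r}. m!j = 0"
proof -
  obtain p where p: "length p = Suc r" "p \<noteq> replicate (Suc r) 0" "height p \<le> Ks r (n-1)"
    "\<bar>fm r \<epsilon> p\<bar> < 1 / (2 * of_int (Ks r n) ^ (r-1))"
    using Lpoint[OF n] by blast
  have adm: "admissible aa p" unfolding admissible_def length_aa using p by simp
  have lm: "length m = Suc r" using ba unfolding is_best_approx_def admissible_def length_aa by simp
  have "zeta aa m \<le> zeta aa p" using ba adm p(3) h1 unfolding is_best_approx_def by auto
  then have fle: "\<bar>fm r \<epsilon> m\<bar> < 1 / (2 * of_int (Ks r n) ^ (r-1))" using p(4) unfolding zeta_fm by simp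
  have mb: "\<forall>j\<le>r. \<bar>m!j\<bar> < Ks r n"
    using height_ge[of _ m] lm h2 by (metis le_imp_less_Suc order_le_less_trans)
  show ?thesis using gap[OF r3, where n=n and m=m and \<epsilon>=\<epsilon>] n mb fle by auto
qed

lemma kill:
  assumes n: "n \<ge> 1" and cb: "\<forall>j\<le>r. \<bar>c!j\<bar> < Ks r n"
    and eq: "of_int (c!1) * tlx r \<epsilon> n 1 + of_int (c!2) * tlx r \<epsilon> n 2 = 0"
  shows "c ! (if even (Suc n) then 1 else 2) = 0"
proof (rule ccontr)
  define a where "a = (if even (Suc n) then 1 else 2::nat)"
  define b where "b = (if even (Suc n) then 2 else 1::nat)"
  assume "c ! (if even (Suc n) then 1 else 2) \<noteq> 0"
  then have ca: "c!a \<noteq> 0" unfolding a_def .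
  have a12: "a = 1 \<or> a = 2" and b12: "b = 1 \<or> b = 2" unfolding a_def b_def by auto
  have ar: "a \<le> r" "b \<le> r" using a12 b12 r3 by auto
  have eq2: "of_int (c!a) * tlx r \<epsilon> n a + of_int (c!b) * tlx r \<epsilon> n b = 0"
    using eq unfolding a_def b_def by (auto simp: add.commute)
  let ?K = "(of_int (Ks r n) :: real)" and ?K1 = "(of_int (Ks r (Suc n)) :: real)"
    and ?K2 = "(of_int (Ks r (Suc (Suc n))) :: real)"
  have K1: "?K1 \<ge> 1" using KposR[OF r3] .
  have tma: "tm r \<epsilon> (Suc n) a \<ge> 1 / ?K1"
  proof -
    have "tm r \<epsilon> (Suc n) a = of_int (ee \<epsilon> (Suc n)) / ?K1" using tm12[OF a12, of "Suc n"] unfolding a_def by auto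
    moreover have "(of_int (ee \<epsilon> (Suc n)) :: real) \<ge> 1" using ee_bounds(1)[OF r3, where \<epsilon>=\<epsilon> and k="Suc n"] by simp
    ultimately show ?thesis using K1 by (simp add: divide_right_mono)
  qed
  have tmb: "tm r \<epsilon> (Suc n) b = 0" using tm12[OF b12, of "Suc n"] unfolding b_def by auto
  have A: "\<bar>of_int (c!a) * tlx r \<epsilon> n a\<bar> \<ge> 1 / ?K1"
  proof -
    have "tlx r \<epsilon> n a \<ge> 1 / ?K1" using tl_ge[OF r3 ar(1), where n=n and \<epsilon>=\<epsilon>] tma by simp
    moreover have "\<bar>(of_int (c!a) :: real)\<bar> \<ge> 1" using ca by (metis of_int_1_le_iff zero_less_abs_iff int_one_le_iff_zero_less of_int_abs)
    ultimately have "\<bar>(of_int (c!a) :: real)\<bar> * tlx r \<epsilon> n a \<ge> 1 * (1 / ?K1)"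
      using K1 by (intro mult_mono) auto
    moreover have "tlx r \<epsilon> n a \<ge> 0" using tl_nonneg[OF r3 ar(1)] .
    ultimately show ?thesis by (simp add: abs_mult)
  qed
  have B: "\<bar>of_int (c!b) * tlx r \<epsilon> n b\<bar> \<le> ?K * (4 / ?K2)"
  proof -
    have tb: "tlx r \<epsilon> n b = tlx r \<epsilon> (Suc n) b" using tl_Suc[OF r3, where n=n and j=b and \<epsilon>=\<epsilon>] tmb by simp
    have "\<bar>(of_int (c!b) :: real)\<bar> \<le> ?K" using cb ar(2) by (metis less_imp_le of_int_abs of_int_le_iff)
    then have "\<bar>(of_int (c!b) :: real)\<bar> * tlx r \<epsilon> n b \<le> ?K * (4 / ?K2)"
      unfolding tb using tl_le[OF r3 ar(2), where n="Suc n" and \<epsilon>=\<epsilon>] tl_nonneg[OF r3 ar(2)]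
      by (intro mult_mono) auto
    then show ?thesis using tl_nonneg[OF r3 ar(2)] by (simp add: abs_mult)
  qed
  have C: "?K * (4 / ?K2) < 1 / ?K1"
  proof -
    have i1: "Ks r (Suc n) ^ r \<ge> Ks r (Suc n) ^ 2"
      using Kpos[OF r3, of "Suc n"] r3 by (intro power_increasing) auto
    have i2: "Ks r (Suc n) ^ 2 \<ge> Ks r (Suc n) * Ks r n"
    proof -
      have m: "Ks r n \<le> Ks r (Suc n)" using Ks_mono[OF r3, of n "Suc n"] by simp
      have "0 \<le> Ks r (Suc n)" using Kpos[OF r3, of "Suc n"] by linarith
      then show ?thesis unfolding power2_eq_square by (rule mult_left_mono[OF m])
    qed
    have i3: "8 * (int r + 1) * Ks r (Suc n) ^ r \<ge> 8 * (Ks r (Suc n) ^ r)"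
      using Kpos[OF r3, of "Suc n"] by (intro mult_right_mono) auto
    have P1: "Ks r (Suc n) * Ks r n \<ge> 1 * 1"
      using Kpos[OF r3, of n] Kpos[OF r3, of "Suc n"] by (intro mult_mono) auto
    have e: "4 * Ks r n * Ks r (Suc n) = 4 * (Ks r (Suc n) * Ks r n)" by (simp add: ac_simps)
    have "4 * Ks r n * Ks r (Suc n) < Ks r (Suc (Suc n))"
      unfolding Ks_Suc_eq[OF r3, of "Suc n"] e using i1 i2 i3 P1 by linarith
    then have "4 * ?K * ?K1 < ?K2" by (metis of_int_less_iff of_int_mult of_int_numeral)
    moreover have "?K2 > 0" "?K1 > 0"
      using KposR[OF r3, of "Suc (Suc n)"] KposR[OF r3, of "Suc n"] by (linarith+)
    ultimately show ?thesis by (simp add: field_simps del: Ks.simps)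
  qed
  show False using A B C eq2 by linarith
qed

lemma indep_int:
  assumes len: "length c = Suc r" and f0: "fm r \<epsilon> c = 0"
  shows "\<forall>j\<le>r. c!j = 0"
proof -
  define n where "n = Suc (nat (height c))"
  have "int n < 2 ^ n" using less_exp[of n] by (metis of_nat_less_iff of_nat_numeral of_nat_power)
  then have "int n \<le> Ks r n" using Ks_ge_pow[OF r3, of n] by linarith
  then have Hlt: "height c < Ks r n" unfolding n_def by linarith
  have cb: "\<forall>j\<le>r. \<bar>c!j\<bar> < Ks r n" using height_ge[of _ c] len Hlt by (metis le_imp_less_Suc order_le_less_trans)
  have cb1: "\<forall>j\<le>r. \<bar>c!j\<bar> < Ks r (Suc n)" using cb Ks_mono[OF r3, of n "Suc n"] by force
  have n1: "n \<ge> 1" unfolding n_def by simp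
  have g1: "(\<forall>j\<in>{3..r}. c!j = 0) \<and> of_int (c!1) * tlx r \<epsilon> n 1 + of_int (c!2) * tlx r \<epsilon> n 2 = 0"
    using gap[OF r3, where n=n and m=c and \<epsilon>=\<epsilon>] n1 cb f0 by auto
  have pos: "1/(2*of_int(Ks r (Suc n))^(r-1)) > (0::real)" using KposR[OF r3, of "Suc n"]
    by (simp del: Ks.simps)
  have g2: "of_int (c!1) * tlx r \<epsilon> (Suc n) 1 + of_int (c!2) * tlx r \<epsilon> (Suc n) 2 = 0"
    using gap[OF r3, where n="Suc n" and m=c and \<epsilon>=\<epsilon>] cb1 f0 pos by (auto simp del: Ks.simps)
  have k1: "c ! (if even (Suc n) then 1 else 2) = 0" using kill[OF n1 cb] g1 by blast
  have k2: "c ! (if even (Suc (Suc n)) then 1 else 2) = 0" using kill[OF _ cb1 g2] by simp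
  have c12: "c!1 = 0" "c!2 = 0" using k1 k2 by (auto split: if_splits)
  have "fm r \<epsilon> c = of_int (c!0)" unfolding fm_def sum_split12[OF r3] using c12 g1 by simp
  then have "c!0 = 0" using f0 by simp
  then show ?thesis using c12 g1 by (metis atLeastAtMost_iff le_neq_implies_less less_2_cases_iff not_le numeral_2_eq_2 numeral_3_eq_3 One_nat_def Suc_leI)
qed

end



lemma height_uminus: "height (map uminus m) = height m"
  unfolding height_def by (simp add: comp_def)

lemma height_nonneg: "m \<noteq> [] \<Longrightarrow> height m \<ge> 0"
  using height_ge[of 0 m] by simp

lemma finite_height_le: "finite {m :: int list. length m = N \<and> height m \<le> B}"
proof -
  have "{m :: int list. length m = N \<and> height m \<le> B} \<subseteq> {xs. set xs \<subseteq> {-B..B} \<and> length xs = N}"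
  proof
    fix m :: "int list" assume m: "m \<in> {m :: int list. length m = N \<and> height m \<le> B}"
    have "set m \<subseteq> {-B..B}"
    proof
      fix x assume x: "x \<in> set m"
      then obtain i where i: "i < length m" "m!i = x" by (auto simp: in_set_conv_nth)
      then have "\<bar>x\<bar> \<le> B" using height_ge[OF i(1)] m by simp
      then show "x \<in> {-B..B}" by (auto simp: abs_le_iff)
    qed
    then show "m \<in> {xs. set xs \<subseteq> {-B..B} \<and> length xs = N}" using m by simp
  qed
  moreover have "finite {xs. set xs \<subseteq> {-B..B} \<and> length xs = N}"
    by (intro finite_lists_length_eq) simp
  ultimately show ?thesis by (rule finite_subset)
qed

context fixes r :: nat and \<epsilon> :: "nat \<Rightarrow> bool" assumes r3: "3 \<le> r" begin

lemma fm_map: "fm r \<epsilon> (map f [0..<Suc r]) = of_int (f 0) + (\<Sum>j = 1..r. of_int (f j) * al r \<epsilon> j)"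
proof -
  have nth: "\<And>i. i \<le> r \<Longrightarrow> map f [0..<Suc r] ! i = f i"
    by (subst nth_map) (auto simp del: upt_Suc)
  show ?thesis unfolding fm_def using nth[of 0] by (simp del: upt_Suc add: nth)
qed

lemma list_eq_map: "length m = Suc r \<Longrightarrow> m = map (\<lambda>j. m!j) [0..<Suc r]"
  by (intro nth_equalityI) (auto simp del: upt_Suc)

lemma fm_nonzero: assumes "admissible (aa r \<epsilon>) m" shows "fm r \<epsilon> m \<noteq> 0"
proof
  assume f: "fm r \<epsilon> m = 0"
  have len: "length m = Suc r" using assms unfolding admissible_def length_aa[OF r3] by simp
  then have "\<forall>j\<le>r. m!j = 0" using indep_int[OF r3 len f] by simp
  then have "m = replicate (Suc r) 0" using len by (auto intro!: nth_equalityI simp del: replicate_Suc)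
  then show False using assms unfolding admissible_def length_aa[OF r3] by simp
qed

lemma zeta_pos: "admissible (aa r \<epsilon>) m \<Longrightarrow> zeta (aa r \<epsilon>) m > 0"
  unfolding zeta_fm[OF r3] using fm_nonzero by simp

lemma zeta_eq:
  assumes am: "admissible (aa r \<epsilon>) m" and an: "admissible (aa r \<epsilon>) n"
    and z: "zeta (aa r \<epsilon>) m = zeta (aa r \<epsilon>) n"
  shows "m = n \<or> m = map uminus n"
proof -
  have lm: "length m = Suc r" and ln: "length n = Suc r"
    using am an unfolding admissible_def length_aa[OF r3] by auto
  have "fm r \<epsilon> m = fm r \<epsilon> n \<or> fm r \<epsilon> m = - fm r \<epsilon> n" using z unfolding zeta_fm[OF r3] by linarith
  then show ?thesis
  proof
    assume e: "fm r \<epsilon> m = fm r \<epsilon> n"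
    have "fm r \<epsilon> (map (\<lambda>j. m!j - n!j) [0..<Suc r]) = fm r \<epsilon> m - fm r \<epsilon> n"
      unfolding fm_map by (simp add: fm_def algebra_simps sum_subtractf del: upt_Suc)
    then have "\<forall>j\<le>r. map (\<lambda>j. m!j - n!j) [0..<Suc r] ! j = 0" using e by (intro indep_int[OF r3]) auto
    then have "\<forall>j\<le>r. m!j = n!j" by (auto simp del: upt_Suc)
    then show ?thesis using lm ln by (auto intro!: nth_equalityI)
  next
    assume e: "fm r \<epsilon> m = - fm r \<epsilon> n"
    have "fm r \<epsilon> (map (\<lambda>j. m!j + n!j) [0..<Suc r]) = fm r \<epsilon> m + fm r \<epsilon> n"
      unfolding fm_map by (simp add: fm_def algebra_simps sum.distrib del: upt_Suc)
    then have "\<forall>j\<le>r. map (\<lambda>j. m!j + n!j) [0..<Suc r] ! j = 0" using e by (intro indep_int[OF r3]) auto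
    then have "\<forall>j\<le>r. m!j = - (n!j)" by (auto simp del: upt_Suc)
    then show ?thesis using lm ln by (auto intro!: nth_equalityI)
  qed
qed

lemma lin_indep: "lin_indep_1 (aa r \<epsilon>)"
  unfolding lin_indep_1_def length_aa[OF r3]
proof (intro allI impI)
  fix q :: "rat list" and j
  assume lq: "length q = r + 1"
    and eq: "of_rat (q ! 0) + (\<Sum>j = 1..r. of_rat (q ! j) * aa r \<epsilon> ! (j - 1)) = 0"
    and j: "j \<le> r"
  define den where "den i = snd (quotient_of (q!i))" for i
  define nu where "nu i = fst (quotient_of (q!i))" for i
  define d where "d = (\<Prod>i<Suc r. den i)"
  have denpos: "den i > 0" for i unfolding den_def by (rule quotient_of_denom_pos')
  have dpos: "d > 0" unfolding d_def using denpos by (intro prod_pos) auto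
  have qi: "q!i = of_int (nu i) / of_int (den i)" for i
    unfolding nu_def den_def by (rule quotient_of_div) simp
  define c where "c = map (\<lambda>i. nu i * (d div den i)) [0..<Suc r]"
  have cq: "(of_int (c!i) :: rat) = of_int d * q!i" if "i \<le> r" for i
  proof -
    have "den i dvd d" unfolding d_def using that by (intro dvd_prodI) auto
    then have dd: "d = den i * (d div den i)" by simp
    have "c!i = nu i * (d div den i)" unfolding c_def using that by (subst nth_map) (auto simp del: upt_Suc)
    moreover have "(of_int d :: rat) = of_int (den i) * of_int (d div den i)"
      using dd by (metis of_int_mult)
    ultimately show ?thesis unfolding qi using denpos[of i] by (simp add: field_simps)
  qed
  have cr: "(of_int (c!i) :: real) = of_int d * of_rat (q!i)" if "i \<le> r" for i
  proof -
    have "(of_int (c!i) :: real) = of_rat (of_int (c!i))" by simp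
    also have "\<dots> = of_int d * of_rat (q!i)" unfolding cq[OF that] by (simp add: of_rat_mult)
    finally show ?thesis .
  qed
  have lc: "length c = Suc r" unfolding c_def by simp
  have "fm r \<epsilon> c = of_int d * (of_rat (q ! 0) + (\<Sum>j = 1..r. of_rat (q ! j) * aa r \<epsilon> ! (j - 1)))"
    unfolding fm_def distrib_left sum_distrib_left
    by (intro arg_cong2[where f="(+)"] sum.cong) (auto simp: cr aa_nth[OF r3, unfolded One_nat_def])
  then have "fm r \<epsilon> c = 0" using eq by simp
  then have "c!j = 0" using indep_int[OF r3 lc] j by simp
  then have "(of_int d :: rat) * q!j = 0" using cq[OF j] by simp
  then show "q!j = 0" using dpos by simp
qed


lemma exK: "\<exists>n. (x::int) < Ks r n"
proof -
  define n where "n = nat x + 1"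
  have "int n < 2 ^ n" using less_exp[of n] by (metis of_nat_less_iff of_nat_numeral of_nat_power)
  then have "int n \<le> Ks r n" using Ks_ge_pow[OF r3, of n] by linarith
  then have "x < Ks r n" unfolding n_def by linarith
  then show ?thesis by blast
qed

lemma nat_lt_Ks: "int n < Ks r n"
proof -
  have "int n < 2 ^ n" using less_exp[of n] by (metis of_nat_less_iff of_nat_numeral of_nat_power)
  then show ?thesis using Ks_ge_pow[OF r3, of n] by linarith
qed

lemma admissible_len: "admissible (aa r \<epsilon>) m \<Longrightarrow> length m = Suc r"
  unfolding admissible_def length_aa[OF r3] by simp

lemma ex_ba: "\<exists>m. is_best_approx (aa r \<epsilon>) m \<and> height m \<ge> B"
proof -
  let ?a = "aa r \<epsilon>"
  define F where "F = {m. length m = Suc r \<and> height m \<le> B - 1} \<inter> {m. admissible ?a m}"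
  have finF: "finite F" unfolding F_def by (rule finite_Int[OF disjI1[OF finite_height_le]])
  define \<mu> where "\<mu> = Min (insert 1 (zeta ?a ` F))"
  have zp: "\<forall>m\<in>F. zeta ?a m > 0" using zeta_pos unfolding F_def by blast
  have mupos: "\<mu> > 0" unfolding \<mu>_def using finF zp by (subst Min_gr_iff) auto
  have mule: "\<forall>m\<in>F. \<mu> \<le> zeta ?a m" unfolding \<mu>_def using finF by (auto intro: Min_le)
  obtain N :: nat where N: "1 / \<mu> < of_nat N" using reals_Archimedean2 by blast
  define n where "n = N + 2"
  have n2: "n \<ge> 2" unfolding n_def by simp
  let ?K = "(of_int (Ks r n) :: real)"
  have "int N < Ks r n" using nat_lt_Ks[of n] unfolding n_def by linarith
  then have KN: "of_nat N < ?K" by (metis of_int_less_iff of_int_of_nat_eq)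
  have K1: "?K \<ge> 1" using KposR[OF r3] .
  have "?K ^ 1 \<le> ?K ^ (r-1)" using K1 r3 by (intro power_increasing) auto
  then have P: "?K \<le> ?K ^ (r-1)" by (simp only: power_one_right)
  have "1 / \<mu> < 2 * ?K ^ (r-1)" using N KN K1 P by linarith
  then have small: "1 / (2 * ?K ^ (r-1)) < \<mu>" using mupos K1
    by (simp add: field_simps)
  obtain p where p: "length p = Suc r" "p \<noteq> replicate (Suc r) 0" "height p \<le> Ks r (n-1)"
    "\<bar>fm r \<epsilon> p\<bar> < 1 / (2 * ?K ^ (r-1))"
    using Lpoint[OF r3 n2, where \<epsilon>=\<epsilon>] by blast
  have adm: "admissible ?a p" unfolding admissible_def length_aa[OF r3] using p by simp
  define G where "G = {m. length m = Suc r \<and> height m \<le> height p} \<inter> {m. admissible ?a m}"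
  have finG: "finite G" unfolding G_def by (rule finite_Int[OF disjI1[OF finite_height_le]])
  have pG: "p \<in> G" unfolding G_def using adm p by simp
  define ms where "ms = arg_min_on (zeta ?a) G"
  have msG: "ms \<in> G" and msmin: "\<not>(\<exists>x\<in>G. zeta ?a x < zeta ?a ms)"
    using arg_min_if_finite[OF finG, of "zeta ?a"] pG unfolding ms_def by auto
  have ba: "is_best_approx ?a ms"
    unfolding is_best_approx_def
  proof (intro conjI allI impI)
    show "admissible ?a ms" using msG unfolding G_def by simp
    fix n' assume n': "admissible ?a n' \<and> height n' \<le> height ms"
    have "length n' = Suc r" using n' admissible_len by blast
    moreover have "height ms \<le> height p" using msG unfolding G_def by blast
    ultimately have "n' \<in> G" using n' unfolding G_def by simp
    then show "zeta ?a ms \<le> zeta ?a n'" using msmin by (metis not_le)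
  qed
  have "height ms \<ge> B"
  proof (rule ccontr)
    assume "\<not> height ms \<ge> B"
    then have "ms \<in> F" using msG unfolding F_def G_def by auto
    then have "\<mu> \<le> zeta ?a ms" using mule by auto
    also have "\<dots> \<le> zeta ?a p" using msmin pG by (metis not_le)
    also have "\<dots> < \<mu>" using p(4) small unfolding zeta_fm[OF r3] by simp
    finally show False by simp
  qed
  then show ?thesis using ba by blast
qed

lemma ba_adm: "is_best_approx (aa r \<epsilon>) m \<Longrightarrow> admissible (aa r \<epsilon>) m"
  unfolding is_best_approx_def by (rule conjunct1)

lemma ba_le: assumes a1: "is_best_approx (aa r \<epsilon>) m" and a2: "is_best_approx (aa r \<epsilon>) m'"
  and h: "height m \<le> height m'"
  shows "zeta (aa r \<epsilon>) m' \<le> zeta (aa r \<epsilon>) m"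
proof -
  have "\<forall>n. admissible (aa r \<epsilon>) n \<and> height n \<le> height m' \<longrightarrow> zeta (aa r \<epsilon>) m' \<le> zeta (aa r \<epsilon>) n"
    using a2 unfolding is_best_approx_def by (rule conjunct2)
  then show ?thesis using ba_adm[OF a1] h by simp
qed

lemma ba_lt: assumes "is_best_approx (aa r \<epsilon>) m" "is_best_approx (aa r \<epsilon>) m'" "height m < height m'"
  shows "zeta (aa r \<epsilon>) m' < zeta (aa r \<epsilon>) m"
proof -
  have le: "zeta (aa r \<epsilon>) m' \<le> zeta (aa r \<epsilon>) m" using ba_le[OF assms(1,2)] assms(3) by simp
  have "zeta (aa r \<epsilon>) m' \<noteq> zeta (aa r \<epsilon>) m"
  proof
    assume z: "zeta (aa r \<epsilon>) m' = zeta (aa r \<epsilon>) m"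
    have "m' = m \<or> m' = map uminus m" by (rule zeta_eq[OF ba_adm[OF assms(2)] ba_adm[OF assms(1)] z])
    then have "height m' = height m" using height_uminus[of m] by auto
    then show False using assms(3) by simp
  qed
  then show ?thesis using le by simp
qed

lemma ba_eq: assumes "is_best_approx (aa r \<epsilon>) m" "is_best_approx (aa r \<epsilon>) m'" "height m = height m'"
  shows "m = m' \<or> m = map uminus m'"
proof -
  have z: "zeta (aa r \<epsilon>) m = zeta (aa r \<epsilon>) m'" using ba_le[OF assms(1,2)] ba_le[OF assms(2,1)] assms(3) by simp
  show ?thesis by (rule zeta_eq[OF ba_adm[OF assms(1)] ba_adm[OF assms(2)] z])
qed

lemma ba_height_nonneg: "is_best_approx (aa r \<epsilon>) m \<Longrightarrow> height m \<ge> 0"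
proof -
  assume "is_best_approx (aa r \<epsilon>) m"
  then have "length m = Suc r" by (rule admissible_len[OF ba_adm])
  then have "m \<noteq> []" by auto
  then show ?thesis by (rule height_nonneg)
qed

lemma ex_seq: "\<exists>ms. best_approx_seq (aa r \<epsilon>) ms"
proof -
  let ?a = "aa r \<epsilon>"
  define HS where "HS = (\<lambda>m. nat (height m)) ` {m. is_best_approx ?a m}"
  have inf: "infinite HS" unfolding infinite_nat_iff_unbounded_le
  proof
    fix k
    obtain m where "is_best_approx ?a m" "height m \<ge> int k" using ex_ba by blast
    then show "\<exists>n\<ge>k. n \<in> HS" unfolding HS_def
      by (intro exI[of _ "nat (height m)"]) (auto simp: le_nat_iff)
  qed
  define ms where "ms \<nu> = (SOME m. is_best_approx ?a m \<and> nat (height m) = enumerate HS (\<nu> - 1))" for \<nu>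
  have msP: "is_best_approx ?a (ms \<nu>) \<and> nat (height (ms \<nu>)) = enumerate HS (\<nu> - 1)" for \<nu>
  proof -
    have "enumerate HS (\<nu> - 1) \<in> HS" using enumerate_in_set[OF inf] .
    then have "\<exists>m. is_best_approx ?a m \<and> nat (height m) = enumerate HS (\<nu> - 1)" unfolding HS_def by force
    then show ?thesis unfolding ms_def by (rule someI_ex)
  qed
  have hms: "height (ms \<nu>) = int (enumerate HS (\<nu> - 1))" for \<nu>
    using msP[of \<nu>] ba_height_nonneg by (metis int_nat_eq)
  have "best_approx_seq ?a ms"
    unfolding best_approx_seq_def
  proof (intro conjI allI impI)
    fix \<nu> :: nat assume "\<nu> \<ge> 1"
    show "is_best_approx ?a (ms \<nu>)" using msP by blast
  next
    fix \<nu> :: nat assume \<nu>: "\<nu> \<ge> 1"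
    have "enumerate HS (\<nu> - 1) < enumerate HS (\<nu> + 1 - 1)" using \<nu> enumerate_step[OF inf, of "\<nu> - 1"] by simp
    then have "height (ms \<nu>) < height (ms (\<nu> + 1))" unfolding hms by simp
    then show "zeta ?a (ms (\<nu> + 1)) < zeta ?a (ms \<nu>)" using ba_lt msP by blast
  next
    fix m assume m: "is_best_approx ?a m"
    then have "nat (height m) \<in> HS" unfolding HS_def by blast
    then obtain s where s: "enumerate HS s = nat (height m)" using enumerate_Ex[OF inf] by blast
    have "height (ms (Suc s)) = height m" using hms[of "Suc s"] s ba_height_nonneg[OF m] by simp
    then show "\<exists>\<nu>\<ge>1. m = ms \<nu> \<or> m = map uminus (ms \<nu>)" using ba_eq[OF m msP[THEN conjunct1]]
      by (intro exI[of _ "Suc s"]) simp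
  qed
  then show ?thesis by blast
qed


lemma seq_dec0: "best_approx_seq (aa r \<epsilon>) ms \<Longrightarrow> \<forall>\<nu>\<ge>1. zeta (aa r \<epsilon>) (ms (\<nu> + 1)) < zeta (aa r \<epsilon>) (ms \<nu>)"
  unfolding best_approx_seq_def by (rule conjunct1[OF conjunct2])

lemma seq_dec:
  assumes bs: "best_approx_seq (aa r \<epsilon>) ms" and nu: "\<nu> \<ge> 1"
  shows "zeta (aa r \<epsilon>) (ms (\<nu> + Suc d)) < zeta (aa r \<epsilon>) (ms \<nu>)"
proof (induction d)
  case 0 then show ?case using seq_dec0[OF bs] nu by simp
next
  case (Suc d)
  have "\<nu> + Suc d \<ge> 1" using nu by simp
  then have "zeta (aa r \<epsilon>) (ms (\<nu> + Suc d + 1)) < zeta (aa r \<epsilon>) (ms (\<nu> + Suc d))"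
    using seq_dec0[OF bs] by blast
  then show ?case using Suc by simp
qed

lemma seq_inj:
  assumes bs: "best_approx_seq (aa r \<epsilon>) ms"
  shows "inj_on ms {1..}"
proof (rule inj_onI)
  fix x y assume x: "x \<in> {1..}" and y: "y \<in> {1..}" and e: "ms x = ms y"
  show "x = y"
  proof (rule ccontr)
    assume "x \<noteq> y"
    then consider "x < y" | "y < x" by linarith
    then show False
    proof cases
      case 1
      obtain d where "y = Suc (x + d)" using less_imp_Suc_add[OF 1] by blast
      then have yd: "y = x + Suc d" by simp
      have "zeta (aa r \<epsilon>) (ms y) < zeta (aa r \<epsilon>) (ms x)" unfolding yd using seq_dec[OF bs, of x d] x by auto
      then show False using e by simp
    next
      case 2
      obtain d where "x = Suc (y + d)" using less_imp_Suc_add[OF 2] by blast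
      then have xd: "x = y + Suc d" by simp
      have "zeta (aa r \<epsilon>) (ms x) < zeta (aa r \<epsilon>) (ms y)" unfolding xd using seq_dec[OF bs, of y d] y by auto
      then show False using e by simp
    qed
  qed
qed

lemma seq_L:
  assumes bs: "best_approx_seq (aa r \<epsilon>) ms"
  shows "\<exists>\<nu>0. \<forall>\<nu>>\<nu>0. \<forall>j\<in>{3..r}. ms \<nu> ! j = 0"
proof -
  let ?a = "aa r \<epsilon>"
  have ba0: "\<forall>\<nu>\<ge>1. is_best_approx ?a (ms \<nu>)" using bs unfolding best_approx_seq_def by (rule conjunct1)
  have ba: "\<And>\<nu>. \<nu> \<ge> 1 \<Longrightarrow> is_best_approx ?a (ms \<nu>)" using ba0 by simp
  define A where "A = {\<nu>. 1 \<le> \<nu> \<and> height (ms \<nu>) < Ks r 1}"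
  have "ms ` A \<subseteq> {m. length m = Suc r \<and> height m \<le> Ks r 1}"
  proof
    fix m assume "m \<in> ms ` A"
    then obtain \<nu> where nu: "\<nu> \<in> A" "m = ms \<nu>" by blast
    then have "1 \<le> \<nu>" "height (ms \<nu>) < Ks r 1" unfolding A_def by simp_all
    moreover have "length (ms \<nu>) = Suc r" using admissible_len[OF ba_adm[OF ba[OF \<open>1 \<le> \<nu>\<close>]]] .
    ultimately show "m \<in> {m. length m = Suc r \<and> height m \<le> Ks r 1}" using nu by simp
  qed
  then have "finite (ms ` A)" by (rule finite_subset) (rule finite_height_le)
  moreover have "inj_on ms A" using seq_inj[OF bs] unfolding A_def by (rule inj_on_subset) auto
  ultimately have finA: "finite A" using finite_imageD by blast
  define \<nu>0 where "\<nu>0 = Max (insert 0 A)"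
  have "\<forall>j\<in>{3..r}. ms \<nu> ! j = 0" if nu: "\<nu> > \<nu>0" for \<nu>
  proof -
    have "\<nu> \<notin> A"
    proof
      assume "\<nu> \<in> A"
      then have "\<nu> \<le> \<nu>0" unfolding \<nu>0_def using finA by (intro Max_ge) simp_all
      then show False using nu by simp
    qed
    moreover have nu1: "\<nu> \<ge> 1" using nu by simp
    ultimately have h1: "height (ms \<nu>) \<ge> Ks r 1" unfolding A_def by simp
    have ex: "\<exists>n. height (ms \<nu>) < Ks r n" by (rule exK)
    define n where "n = (LEAST n. height (ms \<nu>) < Ks r n)"
    have hn: "height (ms \<nu>) < Ks r n" unfolding n_def by (rule LeastI_ex[OF ex])
    have K01: "Ks r 0 \<le> Ks r 1" using Ks_mono[OF r3, of 0 1] by simp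
    have n0: "n \<noteq> 0"
    proof
      assume "n = 0" then show False using hn h1 K01 by simp
    qed
    have n1: "n \<noteq> 1"
    proof
      assume "n = 1" then show False using hn h1 by simp
    qed
    have n2: "n \<ge> 2" using n0 n1 by simp
    have "\<not> height (ms \<nu>) < Ks r (n-1)" unfolding n_def by (rule not_less_Least) (use n0 n_def in simp)
    then have hn1: "Ks r (n-1) \<le> height (ms \<nu>)" by simp
    show ?thesis by (rule ba_in_L[OF r3 ba[OF nu1] n2 hn1 hn])
  qed
  then show ?thesis by blast
qed

end

lemma aa_inj: assumes r3: "3 \<le> r" shows "inj (aa r)"
proof (rule injI)
  fix \<epsilon> \<epsilon>' :: "nat \<Rightarrow> bool" assume eq: "aa r \<epsilon> = aa r \<epsilon>'"
  show "\<epsilon> = \<epsilon>'"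
  proof (rule ccontr)
    assume "\<epsilon> \<noteq> \<epsilon>'"
    then have "\<exists>i. \<epsilon> i \<noteq> \<epsilon>' i" by (simp add: fun_eq_iff)
    then obtain i where i: "\<epsilon> i \<noteq> \<epsilon>' i" and least: "\<forall>i'<i. \<epsilon> i' = \<epsilon>' i'"
      using exists_least_iff[of "\<lambda>i. \<epsilon> i \<noteq> \<epsilon>' i"] by blast
    define k where "k = Suc i"
    define c where "c = (if even k then 1 else 2::nat)"
    have c12: "c = 1 \<or> c = 2" unfolding c_def by auto
    have cr: "1 \<le> c" "c \<le> r" using c12 r3 by auto
    have tmeq: "tm r \<epsilon> k' c = tm r \<epsilon>' k' c" if "k' \<le> i" for k'
    proof (cases "k' = 0")
      case True then show ?thesis by (simp add: tm_def)
    next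
      case False
      then have "\<epsilon> (k' - 1) = \<epsilon>' (k' - 1)" using least that by auto
      then show ?thesis by (simp add: tm_def num_def ee_def)
    qed
    have treq: "tr r \<epsilon> i c = tr r \<epsilon>' i c" unfolding tr_def by (intro sum.cong) (auto simp: tmeq)
    have decomp: "al r e c = tr r e i c + tm r e k c + tlx r e k c" for e
      using al_eq[OF r3, where \<epsilon>=e and j=c and n=i] tl_Suc[OF r3, where \<epsilon>=e and j=c and n=i]
      unfolding k_def by simp
    let ?K = "(of_int (Ks r k) :: real)" and ?K1 = "(of_int (Ks r (Suc k)) :: real)"
    have K1: "?K \<ge> 1" using KposR[OF r3] .
    have tmk: "tm r e k c = of_int (ee e k) / ?K" for e
      using tm12[OF r3 c12, where \<epsilon>=e and k=k] unfolding k_def c_def by auto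
    have eed: "\<bar>(of_int (ee \<epsilon> k) :: real) - of_int (ee \<epsilon>' k)\<bar> = 1"
      using i unfolding ee_def k_def by auto
    have tdiff: "\<bar>tlx r \<epsilon> k c - tlx r \<epsilon>' k c\<bar> \<le> 4 / ?K1"
      using tl_nonneg[OF r3 cr(2), where \<epsilon>=\<epsilon> and n=k] tl_nonneg[OF r3 cr(2), where \<epsilon>=\<epsilon>' and n=k]
        tl_le[OF r3 cr(2), where \<epsilon>=\<epsilon> and n=k] tl_le[OF r3 cr(2), where \<epsilon>=\<epsilon>' and n=k] by linarith
    have "?K1 \<ge> 8 * ?K" using Ks_Suc_ge[OF r3, of k] by (metis of_int_le_iff of_int_mult of_int_numeral)
    then have "4 / ?K1 \<le> 4 / (8 * ?K)" using K1 by (intro divide_left_mono) auto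
    also have "\<dots> < 1 / ?K" using K1 by (simp add: divide_simps)
    finally have small: "\<bar>tlx r \<epsilon> k c - tlx r \<epsilon>' k c\<bar> < 1 / ?K" using tdiff by linarith
    have "al r \<epsilon> c - al r \<epsilon>' c = (of_int (ee \<epsilon> k) - of_int (ee \<epsilon>' k)) / ?K + (tlx r \<epsilon> k c - tlx r \<epsilon>' k c)"
      unfolding decomp treq tmk by (simp add: diff_divide_distrib)
    moreover have "\<bar>(of_int (ee \<epsilon> k) - of_int (ee \<epsilon>' k)) / ?K\<bar> = 1 / ?K"
      using eed K1 by simp
    ultimately have "al r \<epsilon> c \<noteq> al r \<epsilon>' c" using small by auto
    moreover have "aa r \<epsilon> ! (c - 1) = al r \<epsilon> c" "aa r \<epsilon>' ! (c - 1) = al r \<epsilon>' c"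
      using aa_nth[OF r3 cr] by auto
    ultimately show False using eq by simp
  qed
qed

lemma uncountable_bool_seq: "uncountable (UNIV :: (nat \<Rightarrow> bool) set)"
proof -
  have "\<not> (\<exists>f :: nat \<Rightarrow> nat \<Rightarrow> bool. range f = UNIV)"
  proof
    assume "\<exists>f :: nat \<Rightarrow> nat \<Rightarrow> bool. range f = UNIV"
    then obtain f :: "nat \<Rightarrow> nat \<Rightarrow> bool" where f: "range f = UNIV" by blast
    have "(\<lambda>n. \<not> f n n) \<in> range f" using f by simp
    then obtain k where "(\<lambda>n. \<not> f n n) = f k" by blast
    then have "(\<not> f k k) = f k k" by metis
    then show False by simp
  qed
  then show ?thesis unfolding uncountable_def by simp
qed



lemma det_zero_col:
  assumes A: "A \<in> carrier_mat n n" and k: "k < n" and z: "\<forall>i<n. A $$ (i, k) = 0"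
  shows "det A = (0 :: 'a :: comm_ring_1)"
proof -
  have "det A = (\<Sum>p \<in> {p. p permutes {0 ..< n}}. signof p * (\<Prod>i = 0 ..< n. A $$ (i, p i)))"
    by (rule det_def'[OF A])
  also have "\<dots> = 0"
  proof (rule sum.neutral, intro ballI)
    fix p assume "p \<in> {p. p permutes {0 ..< n}}"
    then have pp: "p permutes {0 ..< n}" by simp
    have "k \<in> p ` {0 ..< n}" using permutes_image[OF pp] k by simp
    then obtain i where i: "i \<in> {0 ..< n}" "p i = k" by blast
    have "(\<Prod>i = 0 ..< n. A $$ (i, p i)) = 0"
      using i z by (intro prod_zero) auto
    then show "signof p * (\<Prod>i = 0 ..< n. A $$ (i, p i)) = 0" by simp
  qed
  finally show ?thesis .
qed

theorem mainTheorem3: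
  fixes r :: nat
  assumes "r \<ge> 3"
  shows "\<exists>S :: real list set. uncountable S \<and>
           (\<forall>a \<in> S. length a = r \<and> lin_indep_1 a \<and>
              (\<exists>ms. best_approx_seq a ms) \<and>
              (\<forall>ms. best_approx_seq a ms \<longrightarrow>
                 (\<exists>\<nu>0. \<forall>\<nu> > \<nu>0. Delta r ms \<nu> = 0)))"
proof -
  have r3: "3 \<le> r" using assms by simp
  have unc: "uncountable (range (aa r))"
  proof
    assume "countable (range (aa r))"
    then have "countable (UNIV :: (nat \<Rightarrow> bool) set)"
      using countable_image_inj_on aa_inj[OF r3] by blast
    then show False using uncountable_bool_seq by simp
  qed
  have "\<forall>a \<in> range (aa r). length a = r \<and> lin_indep_1 a \<and>
              (\<exists>ms. best_approx_seq a ms) \<and>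
              (\<forall>ms. best_approx_seq a ms \<longrightarrow>
                 (\<exists>\<nu>0. \<forall>\<nu> > \<nu>0. Delta r ms \<nu> = 0))"
  proof
    fix a assume "a \<in> range (aa r)"
    then obtain \<epsilon> where a: "a = aa r \<epsilon>" by blast
    have D: "\<exists>\<nu>0. \<forall>\<nu> > \<nu>0. Delta r ms \<nu> = 0" if bs: "best_approx_seq a ms" for ms
    proof -
      obtain \<nu>0 where nu0: "\<forall>\<nu>>\<nu>0. \<forall>j\<in>{3..r}. ms \<nu> ! j = 0"
        using seq_L[OF r3, where \<epsilon>=\<epsilon> and ms=ms] bs unfolding a by blast
      have "Delta r ms \<nu> = 0" if nu: "\<nu> > \<nu>0" for \<nu>
        unfolding Delta_def
      proof (rule det_zero_col[where k=3])
        show "mat (r + 1) (r + 1) (\<lambda>(i, j). ms (\<nu> + i) ! j) \<in> carrier_mat (r + 1) (r + 1)" by simp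
        show "3 < r + 1" using r3 by simp
        show "\<forall>i<r + 1. mat (r + 1) (r + 1) (\<lambda>(i, j). ms (\<nu> + i) ! j) $$ (i, 3) = 0"
        proof (intro allI impI)
          fix i assume i: "i < r + 1"
          have "\<nu> + i > \<nu>0" using nu by simp
          then have "ms (\<nu> + i) ! 3 = 0" using nu0 r3 by auto
          then show "mat (r + 1) (r + 1) (\<lambda>(i, j). ms (\<nu> + i) ! j) $$ (i, 3) = 0"
            using i r3 by simp
        qed
      qed
      then show ?thesis by blast
    qed
    show "length a = r \<and> lin_indep_1 a \<and> (\<exists>ms. best_approx_seq a ms) \<and>
              (\<forall>ms. best_approx_seq a ms \<longrightarrow> (\<exists>\<nu>0. \<forall>\<nu> > \<nu>0. Delta r ms \<nu> = 0))"
      using length_aa[OF r3] lin_indep[OF r3] ex_seq[OF r3] D unfolding a by blast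
  qed
  then show ?thesis using unc by blast
qed

end
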